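(* In the setting of the context (linear turning rate), suppose that at the $n$-th jump the exact and discretized processes coincide: $\tilde T_n=T_n$, $\tilde X_{T_n}=X_{T_n}$, $\tilde V_{T_n}=\mathcal V_n$ and $\tilde Y_{T_n}=Y_{T_n}$ (hence $\tilde Z_{T_n}=Z_{T_n}$). Then there is a constant $C$ independent of $\epsilon$, $\delta t$ and $\theta_{n+1}$ such that $$|T_{n+1}-\tilde T_{n+1}|\le C\epsilon^2\,\delta t\,\theta_{n+1}^2\quad\text{and}\quad |X_{T_{n+1}}-\tilde X_{\tilde T_{n+1}}|\le C\epsilon^3\,\delta t\,\theta_{n+1}^2.$$
   Context: Let $d,n\ge1$, $\epsilon>0$, $\delta t>0$. $S:\mathbb{R}^d\to\mathbb{R}^n$ is smooth and bounded with bounded first and second derivatives, $\nabla S(x)\in\mathbb{R}^{n\times d}$ its Jacobian. $\tau_\epsilon$ is an invertible $n\times n$ matrix, and the rate is linear: $\lambda(z)=\lambda_0-b^Tz$, assumed to satisfy $0<\lambda_{\min}\le\lambda\le\lambda_{\max}$ along the trajectories. Exact process between jumps $T_n$ and $T_{n+1}$: $\frac{\mathrm{d}X_t}{\mathrm{d}t}=\epsilon\mathcal V_n$, $\frac{\mathrm{d}Y_t}{\mathrm{d}t}=-\tau_\epsilon^{-1}(Y_t-S(X_t))$, $Z_t=S(X_t)-Y_t$, and $T_{n+1}$ is defined by $\int_{T_n}^{T_{n+1}}\lambda(Z_t)\mathrm{d}t=\theta_{n+1}$, where $\theta_{n+1}>0$ is given and $\mathcal V_n\in\mathbb{S}^{d-1}$.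 Discretized process: with $t_{n,k}=\tilde T_n+k\delta t$, $\tilde X_{n,k}=\tilde X_{t_{n,k}}$, $\tilde Z_{n,k}=\tilde Z_{t_{n,k}}$, define for $t\in[t_{n,k},t_{n,k+1}]$: $\tilde X_t=\tilde X_{n,k}+\epsilon\mathcal V_n(t-t_{n,k})$ and $\tilde Z_t=e^{-(t-t_{n,k})\tau_\epsilon^{-1}}\tilde Z_{n,k}+\epsilon\tau_\epsilon(\mathrm{Id}-e^{-(t-t_{n,k})\tau_\epsilon^{-1}})\nabla S(\tilde X_{n,k})\mathcal V_n$; the discrete jump time $\tilde T_{n+1}$ is defined by $\int_{\tilde T_n}^{\tilde T_{n+1}}\lambda(\tilde Z_t)\mathrm{d}t=\theta_{n+1}$. It is further assumed (as throughout the paper) that $\|e^{-t\tau_\epsilon^{-1}}\|$ is bounded uniformly in $t\ge0$ and $\epsilon$. *)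

theory Defs
  imports "HOL-Analysis.Analysis"
begin

definition op_pow :: "('a::real_normed_vector \<Rightarrow>\<^sub>L 'a) \<Rightarrow> nat \<Rightarrow> ('a \<Rightarrow>\<^sub>L 'a)" where
  "op_pow A k = ((\<lambda>B. A o\<^sub>L B) ^^ k) id_blinfun"

definition op_exp :: "('a::banach \<Rightarrow>\<^sub>L 'a) \<Rightarrow> ('a \<Rightarrow>\<^sub>L 'a)" where
  "op_exp A = (\<Sum>k. (1 / fact k) *\<^sub>R op_pow A k)"

definition semigrp :: "('a::banach \<Rightarrow>\<^sub>L 'a) \<Rightarrow> real \<Rightarrow> ('a \<Rightarrow>\<^sub>L 'a)" where
  "semigrp tauinv t = op_exp (- (t *\<^sub>R tauinv))"

definition rate :: "real \<Rightarrow> 'n::euclidean_space \<Rightarrow> 'n \<Rightarrow> real" where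
  "rate lam0 b z = lam0 - b \<bullet> z"

primrec disc_grid ::
  "('d::euclidean_space \<Rightarrow> ('d \<Rightarrow>\<^sub>L 'n::euclidean_space)) \<Rightarrow> ('n \<Rightarrow>\<^sub>L 'n) \<Rightarrow> ('n \<Rightarrow>\<^sub>L 'n)
   \<Rightarrow> real \<Rightarrow> real \<Rightarrow> 'd \<Rightarrow> 'd \<Rightarrow> 'n \<Rightarrow> nat \<Rightarrow> 'd \<times> 'n" where
  "disc_grid DS tau tauinv eps dt V X0 Z0 0 = (X0, Z0)"
| "disc_grid DS tau tauinv eps dt V X0 Z0 (Suc k) =
     (let (x, z) = disc_grid DS tau tauinv eps dt V X0 Z0 k;
          w = blinfun_apply (DS x) V
      in (x + (eps * dt) *\<^sub>R V,
          blinfun_apply (semigrp tauinv dt) z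
          + eps *\<^sub>R blinfun_apply tau (w - blinfun_apply (semigrp tauinv dt) w)))"

definition disc_idx :: "real \<Rightarrow> real \<Rightarrow> real \<Rightarrow> nat" where
  "disc_idx dt T0 t = nat \<lfloor>(t - T0) / dt\<rfloor>"

definition disc_X ::
  "('d::euclidean_space \<Rightarrow> ('d \<Rightarrow>\<^sub>L 'n::euclidean_space)) \<Rightarrow> ('n \<Rightarrow>\<^sub>L 'n) \<Rightarrow> ('n \<Rightarrow>\<^sub>L 'n)
   \<Rightarrow> real \<Rightarrow> real \<Rightarrow> 'd \<Rightarrow> real \<Rightarrow> 'd \<Rightarrow> 'n \<Rightarrow> real \<Rightarrow> 'd" where
  "disc_X DS tau tauinv eps dt V T0 X0 Z0 t =
     (let k = disc_idx dt T0 t; tk = T0 + real k * dt;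
          (x, z) = disc_grid DS tau tauinv eps dt V X0 Z0 k
      in x + (eps * (t - tk)) *\<^sub>R V)"

definition disc_Z ::
  "('d::euclidean_space \<Rightarrow> ('d \<Rightarrow>\<^sub>L 'n::euclidean_space)) \<Rightarrow> ('n \<Rightarrow>\<^sub>L 'n) \<Rightarrow> ('n \<Rightarrow>\<^sub>L 'n)
   \<Rightarrow> real \<Rightarrow> real \<Rightarrow> 'd \<Rightarrow> real \<Rightarrow> 'd \<Rightarrow> 'n \<Rightarrow> real \<Rightarrow> 'n" where
  "disc_Z DS tau tauinv eps dt V T0 X0 Z0 t =
     (let k = disc_idx dt T0 t; tk = T0 + real k * dt;
          (x, z) = disc_grid DS tau tauinv eps dt V X0 Z0 k;
          w = blinfun_apply (DS x) V
      in blinfun_apply (semigrp tauinv (t - tk)) z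
         + eps *\<^sub>R blinfun_apply tau (w - blinfun_apply (semigrp tauinv (t - tk)) w))"

end

theory Submission
  imports Defs
begin


typedef (overloaded) 'a endo = "UNIV :: ('a::real_normed_vector \<Rightarrow>\<^sub>L 'a) set"
  morphisms Rep_endo Abs_endo by simp

setup_lifting type_definition_endo

instantiation endo :: (real_normed_vector) real_normed_vector
begin
lift_definition norm_endo :: "'a endo \<Rightarrow> real" is norm .
lift_definition minus_endo :: "'a endo \<Rightarrow> 'a endo \<Rightarrow> 'a endo" is "(-)" .
lift_definition plus_endo :: "'a endo \<Rightarrow> 'a endo \<Rightarrow> 'a endo" is "(+)" .
lift_definition uminus_endo :: "'a endo \<Rightarrow> 'a endo" is "uminus" .
lift_definition zero_endo :: "'a endo" is "0" .
lift_definition scaleR_endo :: "real \<Rightarrow> 'a endo \<Rightarrow> 'a endo" is "scaleR" .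
definition dist_endo :: "'a endo \<Rightarrow> 'a endo \<Rightarrow> real" where "dist_endo a b = norm (a - b)"
definition sgn_endo :: "'a endo \<Rightarrow> 'a endo" where "sgn_endo x = scaleR (inverse (norm x)) x"
definition uniformity_endo :: "('a endo \<times> 'a endo) filter" where
  "uniformity_endo = (INF e\<in>{0 <..}. principal {(x, y). dist x y < e})"
definition open_endo :: "'a endo set \<Rightarrow> bool" where
  "open_endo S = (\<forall>x\<in>S. \<forall>\<^sub>F (x', y) in uniformity. x' = x \<longrightarrow> y \<in> S)"
instance
  apply standard
  unfolding dist_endo_def open_endo_def sgn_endo_def uniformity_endo_def
  apply (rule refl | (transfer, force simp: norm_triangle_ineq algebra_simps))+
  done
end

instantiation endo :: ("{real_normed_vector,perfect_space}") real_normed_algebra_1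
begin
lift_definition times_endo :: "'a endo \<Rightarrow> 'a endo \<Rightarrow> 'a endo" is "(o\<^sub>L)" .
lift_definition one_endo :: "'a endo" is "id_blinfun" .
instance
proof
  fix a b c :: "'a endo" and r :: real
  show "a * b * c = a * (b * c)" by transfer (auto intro!: blinfun_eqI)
  show "1 * a = a" by transfer (auto intro!: blinfun_eqI)
  show "a * 1 = a" by transfer (auto intro!: blinfun_eqI)
  show "(a + b) * c = a * c + b * c" by transfer (auto intro!: blinfun_eqI simp: blinfun.bilinear_simps)
  show "a * (b + c) = a * b + a * c" by transfer (auto intro!: blinfun_eqI simp: blinfun.bilinear_simps)
  show "(0::'a endo) \<noteq> 1"
  proof transfer
    show "(0::'a \<Rightarrow>\<^sub>L 'a) \<noteq> id_blinfun" using norm_blinfun_id[where 'a='a] by (metis norm_zero zero_neq_one)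
  qed
  show "r *\<^sub>R a * b = r *\<^sub>R (a * b)" by transfer (auto intro!: blinfun_eqI simp: blinfun.bilinear_simps)
  show "a * r *\<^sub>R b = r *\<^sub>R (a * b)" by transfer (auto intro!: blinfun_eqI simp: blinfun.bilinear_simps)
  show "norm (a * b) \<le> norm a * norm b" by transfer (rule norm_blinfun_compose)
  show "norm (1::'a endo) = 1" by transfer simp
qed
end


lemma dist_Rep_endo: "dist (Rep_endo x) (Rep_endo y) = dist x y"
  unfolding dist_norm by transfer simp

instance endo :: (banach) banach
proof
  fix X :: "nat \<Rightarrow> 'a endo"
  assume "Cauchy X"
  then have "Cauchy (\<lambda>n. Rep_endo (X n))" unfolding Cauchy_def dist_Rep_endo .
  then obtain L where L: "(\<lambda>n. Rep_endo (X n)) \<longlonglongrightarrow> L" using convergent_def Cauchy_convergent_iff by blast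
  have "X \<longlonglongrightarrow> Abs_endo L"
  proof (rule tendstoI)
    fix e :: real assume "0 < e"
    then have "\<forall>\<^sub>F n in sequentially. dist (Rep_endo (X n)) L < e" using L tendstoD by blast
    moreover have "dist (Rep_endo (X n)) L = dist (X n) (Abs_endo L)" for n
      using dist_Rep_endo[of "X n" "Abs_endo L"] by (simp add: Abs_endo_inverse)
    ultimately show "\<forall>\<^sub>F n in sequentially. dist (X n) (Abs_endo L) < e" by simp
  qed
  then show "convergent X" unfolding convergent_def by blast
qed




lemma bounded_linear_Rep_endo: "bounded_linear (Rep_endo :: 'a::real_normed_vector endo \<Rightarrow> _)"
proof
  fix x y :: "'a endo" and r :: real
  show "Rep_endo (x + y) = Rep_endo x + Rep_endo y" by transfer simp
  show "Rep_endo (r *\<^sub>R x) = r *\<^sub>R Rep_endo x" by transfer simp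
  show "\<exists>K. \<forall>x::'a endo. norm (Rep_endo x) \<le> norm x * K"
    by (rule exI[of _ 1]) (transfer, simp)
qed

lemma Rep_endo_pow: "Rep_endo (Abs_endo A ^ k) = op_pow (A::'a::{real_normed_vector,perfect_space} \<Rightarrow>\<^sub>L 'a) k"
proof (induction k)
  case 0 then show ?case by (simp add: op_pow_def one_endo.rep_eq)
next
  case (Suc k)
  then show ?case by (simp add: op_pow_def times_endo.rep_eq Abs_endo_inverse)
qed

lemma op_exp_eq: "op_exp (A::'a::{banach,perfect_space} \<Rightarrow>\<^sub>L 'a) = Rep_endo (exp (Abs_endo A))"
proof -
  have "Rep_endo (exp (Abs_endo A)) = (\<Sum>n. Rep_endo (Abs_endo A ^ n /\<^sub>R fact n))"
    unfolding exp_def by (rule bounded_linear.suminf[OF bounded_linear_Rep_endo summable_exp_generic])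
  also have "\<dots> = op_exp A"
    unfolding op_exp_def
    by (rule suminf_cong) (simp add: scaleR_endo.rep_eq Rep_endo_pow divide_inverse_commute)
  finally show ?thesis by simp
qed

lemma semigrp_eq: "semigrp (A::'a::{banach,perfect_space} \<Rightarrow>\<^sub>L 'a) t = Rep_endo (exp ((- t) *\<^sub>R Abs_endo A))"
  unfolding semigrp_def op_exp_eq
  by (metis (no_types, lifting) scaleR_endo.abs_eq uminus_endo.abs_eq eq_onp_same_args scaleR_minus_left)

lemma semigrp_zero[simp]: "semigrp (A::'a::{banach,perfect_space} \<Rightarrow>\<^sub>L 'a) 0 = id_blinfun"
  unfolding semigrp_eq by (simp add: one_endo.rep_eq)

lemma semigrp_comm: "semigrp A t o\<^sub>L A = A o\<^sub>L semigrp (A::'a::{banach,perfect_space} \<Rightarrow>\<^sub>L 'a) t"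
proof -
  have "exp ((- t) *\<^sub>R Abs_endo A) * Abs_endo A = Abs_endo A * exp ((- t) *\<^sub>R Abs_endo A)"
    by (metis exp_times_scaleR_commute)
  then have "Rep_endo (exp ((- t) *\<^sub>R Abs_endo A) * Abs_endo A) = Rep_endo (Abs_endo A * exp ((- t) *\<^sub>R Abs_endo A))" by simp
  then show ?thesis unfolding semigrp_eq times_endo.rep_eq by (simp add: Abs_endo_inverse)
qed

lemma semigrp_deriv: "((\<lambda>t. semigrp (A::'a::{banach,perfect_space} \<Rightarrow>\<^sub>L 'a) t) has_vector_derivative - (semigrp A t o\<^sub>L A)) (at t)"
proof -
  have d1: "((\<lambda>t. - t) has_vector_derivative (-1)) (at t)"
    by (auto intro!: derivative_eq_intros)
  have d2: "((\<lambda>s. exp (s *\<^sub>R Abs_endo A)) has_vector_derivative exp ((- t) *\<^sub>R Abs_endo A) * Abs_endo A) (at (- t))"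
    by (rule exp_scaleR_has_vector_derivative_right)
  have "((\<lambda>t. exp ((- t) *\<^sub>R Abs_endo A)) has_vector_derivative (-1) *\<^sub>R (exp ((- t) *\<^sub>R Abs_endo A) * Abs_endo A)) (at t)"
    using vector_diff_chain_at[OF d1 d2] by (simp add: o_def)
  from bounded_linear.has_vector_derivative[OF bounded_linear_Rep_endo this]
  show ?thesis unfolding semigrp_eq
    by (simp add: scaleR_endo.rep_eq uminus_endo.rep_eq times_endo.rep_eq Abs_endo_inverse)
qed




lemma grid_x: "fst (disc_grid DS tau A eps dt V X0 Z0 k) = X0 + (eps * (real k * dt)) *\<^sub>R V"
proof (induction k)
  case 0 then show ?case by simp
next
  case (Suc k)
  then show ?case
    by (simp add: Let_def split_beta algebra_simps)
qed

lemma grid_z_Suc: "snd (disc_grid DS tau A eps dt V X0 Z0 (Suc k)) =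
   semigrp A dt (snd (disc_grid DS tau A eps dt V X0 Z0 k))
   + eps *\<^sub>R tau (DS (fst (disc_grid DS tau A eps dt V X0 Z0 k)) V
        - semigrp A dt (DS (fst (disc_grid DS tau A eps dt V X0 Z0 k)) V))"
  by (simp add: Let_def split_beta)

lemma disc_X_eq: "disc_X DS tau A eps dt V T0 X0 Z0 t = X0 + (eps * (t - T0)) *\<^sub>R V"
  unfolding disc_X_def by (simp add: Let_def split_beta grid_x algebra_simps)

definition cellZ where
  "cellZ DS tau A eps dt V T0 X0 Z0 k t =
     semigrp A (t - (T0 + real k * dt)) (snd (disc_grid DS tau A eps dt V X0 Z0 k))
     + eps *\<^sub>R tau (DS (fst (disc_grid DS tau A eps dt V X0 Z0 k)) V
        - semigrp A (t - (T0 + real k * dt)) (DS (fst (disc_grid DS tau A eps dt V X0 Z0 k)) V))"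

lemma disc_Z_cell: "disc_Z DS tau A eps dt V T0 X0 Z0 t = cellZ DS tau A eps dt V T0 X0 Z0 (disc_idx dt T0 t) t"
  unfolding disc_Z_def cellZ_def by (simp add: Let_def split_beta)

lemma cell_start: "cellZ DS tau (A::'n::euclidean_space \<Rightarrow>\<^sub>L 'n) eps dt V T0 X0 Z0 k (T0 + real k * dt) = snd (disc_grid DS tau A eps dt V X0 Z0 k)"
  unfolding cellZ_def by simp

lemma cell_end: "cellZ DS tau (A::'n::euclidean_space \<Rightarrow>\<^sub>L 'n) eps dt V T0 X0 Z0 k (T0 + real (Suc k) * dt) = snd (disc_grid DS tau A eps dt V X0 Z0 (Suc k))"
  unfolding cellZ_def grid_z_Suc by (simp add: algebra_simps)

lemma disc_idx_eq: assumes "0 < dt" "T0 + real k * dt \<le> t" "t < T0 + real (Suc k) * dt"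
  shows "disc_idx dt T0 t = k"
proof -
  have "real k \<le> (t - T0) / dt" "(t - T0) / dt < real k + 1"
    using assms by (auto simp: field_simps)
  then have "\<lfloor>(t - T0) / dt\<rfloor> = int k" by (simp add: floor_eq_iff)
  then show ?thesis unfolding disc_idx_def by simp
qed

lemma disc_Z_on_cell: assumes "0 < dt" "T0 + real k * dt \<le> t" "t \<le> T0 + real (Suc k) * dt"
  shows "disc_Z DS tau (A::'n::euclidean_space \<Rightarrow>\<^sub>L 'n) eps dt V T0 X0 Z0 t = cellZ DS tau A eps dt V T0 X0 Z0 k t"
proof (cases "t < T0 + real (Suc k) * dt")
  case True
  then show ?thesis using disc_idx_eq[OF assms(1,2) True] disc_Z_cell by metis
next
  case False
  then have t: "t = T0 + real (Suc k) * dt" using assms by simp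
  have "disc_idx dt T0 t = Suc k"
    by (rule disc_idx_eq) (use assms t in auto)
  then show ?thesis unfolding disc_Z_cell t by (simp only: cell_end) (metis cell_start)
qed


lemma semigrp_shift_deriv:
  "((\<lambda>s. semigrp (A::'n::euclidean_space \<Rightarrow>\<^sub>L 'n) (s - c)) has_vector_derivative - (semigrp A (t - c) o\<^sub>L A)) (at t)"
proof -
  have d1: "((\<lambda>s. s - c) has_vector_derivative 1) (at t)" by (auto intro!: derivative_eq_intros)
  show ?thesis using vector_diff_chain_at[OF d1 semigrp_deriv[of A "t - c"]] by (simp add: o_def)
qed

lemma semigrp_apply_deriv:
  "((\<lambda>s. semigrp (A::'n::euclidean_space \<Rightarrow>\<^sub>L 'n) (s - c) z) has_vector_derivative - (semigrp A (t - c) (A z))) (at t)"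
  using bounded_linear.has_vector_derivative[OF blinfun.bounded_linear_left semigrp_shift_deriv[of A c t], of z]
  by (simp add: blinfun.minus_left)

lemma cell_deriv:
  fixes A tau :: "'n::euclidean_space \<Rightarrow>\<^sub>L 'n"
  assumes inv1: "tau o\<^sub>L A = id_blinfun" and inv2: "A o\<^sub>L tau = id_blinfun"
  shows "(cellZ DS tau A eps dt V T0 X0 Z0 k has_vector_derivative
      (- A (cellZ DS tau A eps dt V T0 X0 Z0 k t) + eps *\<^sub>R DS (fst (disc_grid DS tau A eps dt V X0 Z0 k)) V)) (at t)"
proof -
  define c where "c = T0 + real k * dt"
  define z where "z = snd (disc_grid DS tau A eps dt V X0 Z0 k)"
  define w where "w = DS (fst (disc_grid DS tau A eps dt V X0 Z0 k)) V"
  define G where "G = semigrp A (t - c)"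
  have cz: "cellZ DS tau A eps dt V T0 X0 Z0 k = (\<lambda>s. semigrp A (s - c) z + eps *\<^sub>R tau (w - semigrp A (s - c) w))"
    unfolding cellZ_def c_def z_def w_def by (rule ext) simp
  have bl: "bounded_linear (\<lambda>v. eps *\<^sub>R tau v)"
    by (rule bounded_linear_compose[OF bounded_linear_scaleR_right blinfun.bounded_linear_right])
  have d3: "((\<lambda>s. w - semigrp A (s - c) w) has_vector_derivative (0 - - G (A w))) (at t)"
    unfolding G_def by (intro has_vector_derivative_diff semigrp_apply_deriv) (auto intro: derivative_eq_intros)
  have d: "(cellZ DS tau A eps dt V T0 X0 Z0 k has_vector_derivative (- G (A z) + eps *\<^sub>R tau (0 - - G (A w)))) (at t)"
    unfolding cz G_def
    by (intro has_vector_derivative_add semigrp_apply_deriv bounded_linear.has_vector_derivative[OF bl, of "\<lambda>s. w - semigrp A (s - c) w", simplified] d3[unfolded G_def])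
  have comm: "G (A v) = A (G v)" for v
    using semigrp_comm[of A "t - c"] unfolding G_def by (metis blinfun_apply_blinfun_compose)
  have i1: "tau (A v) = v" for v using inv1 by (metis blinfun_apply_blinfun_compose blinfun_apply_id_blinfun)
  have i2: "A (tau v) = v" for v using inv2 by (metis blinfun_apply_blinfun_compose blinfun_apply_id_blinfun)
  have "- G (A z) + eps *\<^sub>R tau (0 - - G (A w)) = - A (G z + eps *\<^sub>R tau (w - G w)) + eps *\<^sub>R w"
    by (simp add: comm i1 i2 blinfun.bilinear_simps algebra_simps)
  moreover have "cellZ DS tau A eps dt V T0 X0 Z0 k t = G z + eps *\<^sub>R tau (w - G w)"
    unfolding cz G_def by simp
  ultimately show ?thesis using d unfolding w_def by simp
qed


lemma disc_idx_bounds: assumes "0 < dt" "T0 \<le> s"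
  shows "T0 + real (disc_idx dt T0 s) * dt \<le> s" "s < T0 + real (Suc (disc_idx dt T0 s)) * dt"
proof -
  define f where "f = \<lfloor>(s - T0) / dt\<rfloor>"
  have nn: "0 \<le> (s - T0) / dt" using assms by simp
  then have f0: "0 \<le> f" unfolding f_def by simp
  have e: "real (disc_idx dt T0 s) = of_int f" unfolding disc_idx_def f_def using f0 f_def by simp
  have l1: "of_int f \<le> (s - T0) / dt" "(s - T0) / dt < of_int f + 1"
    unfolding f_def by linarith+
  have "of_int f * dt \<le> s - T0" using l1(1) assms(1) by (simp add: le_divide_eq)
  moreover have "s - T0 < (of_int f + 1) * dt" using l1(2) assms(1) by (simp add: divide_less_eq)
  ultimately show "T0 + real (disc_idx dt T0 s) * dt \<le> s" "s < T0 + real (Suc (disc_idx dt T0 s)) * dt"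
    by (auto simp: algebra_simps e)
qed

lemma disc_Z_cont_k:
  fixes A tau :: "'n::euclidean_space \<Rightarrow>\<^sub>L 'n"
  assumes inv1: "tau o\<^sub>L A = id_blinfun" and inv2: "A o\<^sub>L tau = id_blinfun" and dt: "0 < dt"
  shows "continuous_on {T0..T0 + real k * dt} (disc_Z DS tau A eps dt V T0 X0 Z0)"
proof (induction k)
  case 0 then show ?case by simp
next
  case (Suc k)
  have un: "{T0..T0 + real (Suc k) * dt} = {T0..T0 + real k * dt} \<union> {T0 + real k * dt..T0 + real (Suc k) * dt}"
  proof -
    have h: "0 \<le> real k * dt" using dt by simp
    have e2: "T0 + real (Suc k) * dt = T0 + real k * dt + dt" by (simp add: algebra_simps)
    show ?thesis
      apply (rule set_eqI)
      apply (simp only: e2 atLeastAtMost_iff Un_iff)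
      using h dt by smt
  qed
  have "continuous_on {T0 + real k * dt..T0 + real (Suc k) * dt} (cellZ DS tau A eps dt V T0 X0 Z0 k)"
    by (rule continuous_on_vector_derivative) (rule has_vector_derivative_at_within[OF cell_deriv[OF inv1 inv2]])
  then have "continuous_on {T0 + real k * dt..T0 + real (Suc k) * dt} (disc_Z DS tau A eps dt V T0 X0 Z0)"
    by (rule continuous_on_eq) (auto intro!: disc_Z_on_cell[OF dt, symmetric])
  then show ?case unfolding un by (intro continuous_on_closed_Un Suc) auto
qed

lemma disc_Z_cont:
  fixes A tau :: "'n::euclidean_space \<Rightarrow>\<^sub>L 'n"
  assumes inv1: "tau o\<^sub>L A = id_blinfun" and inv2: "A o\<^sub>L tau = id_blinfun" and dt: "0 < dt"
  shows "continuous_on {T0..t} (disc_Z DS tau A eps dt V T0 X0 Z0)"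
proof -
  obtain k :: nat where "(t - T0) / dt \<le> real k" using real_arch_simple by blast
  then have tk: "t \<le> T0 + real k * dt" using dt by (simp add: field_simps)
  show ?thesis by (rule continuous_on_subset[OF disc_Z_cont_k[OF inv1 inv2 dt, of T0 k]]) (use tk in auto)
qed

lemma disc_Z_deriv:
  fixes A tau :: "'n::euclidean_space \<Rightarrow>\<^sub>L 'n"
  assumes inv1: "tau o\<^sub>L A = id_blinfun" and inv2: "A o\<^sub>L tau = id_blinfun" and dt: "0 < dt"
    and s: "T0 \<le> s" and ng: "\<And>j. s \<noteq> T0 + real j * dt"
  shows "(disc_Z DS tau A eps dt V T0 X0 Z0 has_vector_derivative
      (- A (disc_Z DS tau A eps dt V T0 X0 Z0 s) + eps *\<^sub>R DS (fst (disc_grid DS tau A eps dt V X0 Z0 (disc_idx dt T0 s))) V)) (at s)"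
proof -
  define k where "k = disc_idx dt T0 s"
  have b1: "T0 + real k * dt < s" using disc_idx_bounds(1)[OF dt s] ng[of k] unfolding k_def by force
  have b2: "s < T0 + real (Suc k) * dt" using disc_idx_bounds(2)[OF dt s] unfolding k_def .
  have eq: "disc_Z DS tau A eps dt V T0 X0 Z0 s = cellZ DS tau A eps dt V T0 X0 Z0 k s"
    by (rule disc_Z_on_cell[OF dt]) (use b1 b2 in auto)
  show ?thesis unfolding k_def[symmetric] eq
    apply (rule has_vector_derivative_transform_within_open[OF cell_deriv[OF inv1 inv2], of "{T0 + real k * dt<..<T0 + real (Suc k) * dt}"])
    using b1 b2 apply simp_all
    by (rule disc_Z_on_cell[OF dt, symmetric]) auto
qed




lemma SX_deriv:
  fixes S :: "'d::euclidean_space \<Rightarrow> 'n::euclidean_space" and DS :: "'d \<Rightarrow> ('d \<Rightarrow>\<^sub>L 'n)"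
  assumes S_deriv: "\<And>x. (S has_derivative blinfun_apply (DS x)) (at x)"
  shows "((\<lambda>s. S (X0 + (eps * (s - T0)) *\<^sub>R V)) has_vector_derivative
           DS (X0 + (eps * (s - T0)) *\<^sub>R V) (eps *\<^sub>R V)) (at s within U)"
proof -
  have hX: "((\<lambda>s. X0 + (eps * (s - T0)) *\<^sub>R V) has_derivative (\<lambda>h. h *\<^sub>R (eps *\<^sub>R V))) (at s within U)"
    by (auto intro!: derivative_eq_intros simp: algebra_simps)
  from has_derivative_compose[OF hX S_deriv]
  show ?thesis unfolding has_vector_derivative_def by (simp add: blinfun.scaleR_right)
qed

lemma semigrp_rev_deriv:
  "((\<lambda>s. semigrp (A::'n::euclidean_space \<Rightarrow>\<^sub>L 'n) (t - s)) has_vector_derivative (semigrp A (t - s) o\<^sub>L A)) (at s)"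
proof -
  have d1: "((\<lambda>s. t - s) has_vector_derivative -1) (at s)" by (auto intro!: derivative_eq_intros)
  show ?thesis using vector_diff_chain_at[OF d1 semigrp_deriv[of A "t - s"]] by (simp add: o_def)
qed

lemma semigrp_cont: "continuous_on U (\<lambda>s. semigrp (A::'n::euclidean_space \<Rightarrow>\<^sub>L 'n) (t - s))"
  by (rule continuous_on_vector_derivative) (rule has_vector_derivative_at_within[OF semigrp_rev_deriv])


lemma err_bound:
  fixes S :: "'d::euclidean_space \<Rightarrow> 'n::euclidean_space" and DS :: "'d \<Rightarrow> ('d \<Rightarrow>\<^sub>L 'n)"
    and A tau :: "'n \<Rightarrow>\<^sub>L 'n" and Y :: "real \<Rightarrow> 'n"
  assumes S_deriv: "\<And>x. (S has_derivative blinfun_apply (DS x)) (at x)"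
    and Lip: "\<And>x y. norm (DS x - DS y) \<le> L * norm (x - y)" and L0: "0 \<le> L"
    and inv1: "tau o\<^sub>L A = id_blinfun" and inv2: "A o\<^sub>L tau = id_blinfun"
    and dt: "0 < dt" and eps: "0 < eps" and V: "norm V = 1"
    and Mb: "\<forall>t\<ge>0. norm (semigrp A t) \<le> M"
    and Y0: "Y T0 = Y0"
    and Yd: "\<forall>t\<in>{T0..T}. (Y has_vector_derivative
         (- blinfun_apply A (Y t - S (X0 + (eps * (t - T0)) *\<^sub>R V)))) (at t within {T0..T})"
    and t: "T0 \<le> t" "t \<le> T"
  shows "norm ((S (X0 + (eps * (t - T0)) *\<^sub>R V) - Y t) - disc_Z DS tau A eps dt V T0 X0 (S X0 - Y0) t)
           \<le> M * (L * eps^2 * dt) * (t - T0)"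
proof -
  define X where "X s = X0 + (eps * (s - T0)) *\<^sub>R V" for s
  define Zd where "Zd = disc_Z DS tau A eps dt V T0 X0 (S X0 - Y0)"
  define E where "E s = (S (X s) - Y s) - Zd s" for s
  define F where "F s = semigrp A (t - s) (E s)" for s
  define gx where "gx s = fst (disc_grid DS tau A eps dt V X0 (S X0 - Y0) (disc_idx dt T0 s))" for s
  define g where "g s = eps *\<^sub>R (DS (X s) V - DS (gx s) V)" for s
  define F' where "F' s = semigrp A (t - s) (g s)" for s
  obtain N :: nat where N: "(t - T0) / dt \<le> real N" using real_arch_simple by blast
  then have tN: "t \<le> T0 + real N * dt" using dt by (simp add: field_simps)
  define G where "G = (\<lambda>j. T0 + real j * dt) ` {..N} \<union> {T0, t}"
  have M0: "0 \<le> M" using Mb norm_ge_zero order_trans by blast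
  have E0: "E T0 = 0"
  proof -
    have "Zd T0 = cellZ DS tau A eps dt V T0 X0 (S X0 - Y0) 0 T0"
      unfolding Zd_def by (rule disc_Z_on_cell[OF dt]) (use dt in auto)
    also have "\<dots> = S X0 - Y0" using cell_start[of DS tau A eps dt V T0 X0 "S X0 - Y0" 0] by simp
    finally show ?thesis unfolding E_def X_def using Y0 by simp
  qed
  have deriv: "(F has_vector_derivative F' s) (at s)" if s: "s \<in> {T0..t} - G" for s
  proof -
    have s1: "T0 < s" "s < t" using s unfolding G_def by auto
    have ng: "s \<noteq> T0 + real j * dt" for j
    proof (cases "j \<le> N")
      case True then show ?thesis using s unfolding G_def by auto
    next
      case False
      then have "real N * dt \<le> real j * dt" using dt by simp
      then show ?thesis using tN s1 by auto
    qed
    have atw: "at s within {T0..T} = at s" using s1 t by (intro at_within_Icc_at) auto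
    have dY: "(Y has_vector_derivative (- A (Y s - S (X s)))) (at s)"
      using Yd s1 t atw unfolding X_def by (metis atLeastAtMost_iff less_imp_le order_trans)
    have dSX: "((\<lambda>s. S (X s)) has_vector_derivative DS (X s) (eps *\<^sub>R V)) (at s)"
      unfolding X_def by (rule SX_deriv[OF S_deriv])
    have dZd: "(Zd has_vector_derivative (- A (Zd s) + eps *\<^sub>R DS (gx s) V)) (at s)"
      unfolding Zd_def gx_def by (rule disc_Z_deriv[OF inv1 inv2 dt]) (use s1 ng in auto)
    have dE: "(E has_vector_derivative (DS (X s) (eps *\<^sub>R V) - (- A (Y s - S (X s))) - (- A (Zd s) + eps *\<^sub>R DS (gx s) V))) (at s)"
      unfolding E_def by (intro has_vector_derivative_diff dSX dY dZd)
    have dF: "(F has_vector_derivative (semigrp A (t - s) (DS (X s) (eps *\<^sub>R V) - (- A (Y s - S (X s))) - (- A (Zd s) + eps *\<^sub>R DS (gx s) V))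
              + (semigrp A (t - s) o\<^sub>L A) (E s))) (at s)"
      unfolding F_def by (rule blinfun.has_vector_derivative[OF semigrp_rev_deriv dE])
    have "semigrp A (t - s) (DS (X s) (eps *\<^sub>R V) - (- A (Y s - S (X s))) - (- A (Zd s) + eps *\<^sub>R DS (gx s) V))
              + (semigrp A (t - s) o\<^sub>L A) (E s) = F' s"
      unfolding F'_def g_def E_def
      by (simp add: blinfun.bilinear_simps algebra_simps)
    then show ?thesis using dF by simp
  qed
  have cont: "continuous_on {T0..t} F"
  proof -
    have cY: "continuous_on {T0..t} Y"
      by (rule continuous_on_subset[OF continuous_on_vector_derivative[OF Yd[rule_format]]]) (use t in auto)
    have cSX: "continuous_on {T0..t} (\<lambda>s. S (X s))"
    proof (rule continuous_on_vector_derivative)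
      fix x show "((\<lambda>s. S (X s)) has_vector_derivative DS (X x) (eps *\<^sub>R V)) (at x within {T0..t})"
        unfolding X_def by (rule SX_deriv[OF S_deriv])
    qed
    have cZd: "continuous_on {T0..t} Zd" unfolding Zd_def by (rule disc_Z_cont[OF inv1 inv2 dt])
    have "continuous_on {T0..t} E" unfolding E_def by (intro continuous_intros cY cSX cZd)
    then show ?thesis unfolding F_def by (intro continuous_intros semigrp_cont)
  qed
  have fin: "finite G" unfolding G_def by simp
  have int: "(F' has_integral (F t - F T0)) {T0..t}"
    by (rule fundamental_theorem_of_calculus_strong[OF fin t(1) _ cont]) (rule deriv)
  have bnd: "norm (F' s) \<le> M * (L * eps^2 * dt)" if s: "s \<in> cbox T0 t" for s
  proof -
    have s1: "T0 \<le> s" "s \<le> t" using s by auto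
    have b1: "T0 + real (disc_idx dt T0 s) * dt \<le> s" "s < T0 + real (Suc (disc_idx dt T0 s)) * dt"
      using disc_idx_bounds[OF dt s1(1)] by auto
    define tk where "tk = T0 + real (disc_idx dt T0 s) * dt"
    have xd: "X s - gx s = (eps * (s - tk)) *\<^sub>R V"
      unfolding X_def gx_def grid_x tk_def by (simp add: algebra_simps)
    have e1: "real (Suc (disc_idx dt T0 s)) * dt = real (disc_idx dt T0 s) * dt + dt" by (simp add: algebra_simps)
    have sk: "0 \<le> s - tk" "s - tk \<le> dt" using b1 e1 unfolding tk_def by linarith+
    have "norm (X s - gx s) = \<bar>eps * (s - tk)\<bar> * norm V" unfolding xd by (rule norm_scaleR)
    also have "\<dots> = eps * (s - tk)" using sk eps V by (simp add: abs_of_nonneg)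
    also have "\<dots> \<le> eps * dt" using sk eps by (intro mult_left_mono) simp_all
    finally have nx: "norm (X s - gx s) \<le> eps * dt" .
    have "norm (DS (X s) V - DS (gx s) V) \<le> norm (DS (X s) - DS (gx s)) * norm V"
      by (metis blinfun.diff_left norm_blinfun)
    also have "\<dots> \<le> L * norm (X s - gx s)" using Lip V by simp
    also have "\<dots> \<le> L * (eps * dt)" using nx L0 by (simp add: mult_left_mono)
    finally have ng: "norm (g s) \<le> eps * (L * (eps * dt))" unfolding g_def using eps
      by (simp add: mult_left_mono)
    have "norm (F' s) \<le> norm (semigrp A (t - s)) * norm (g s)" unfolding F'_def by (rule norm_blinfun)
    also have "\<dots> \<le> M * norm (g s)" using Mb s1 by (simp add: mult_right_mono)
    also have "\<dots> \<le> M * (eps * (L * (eps * dt)))" using ng M0 by (simp add: mult_left_mono)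
    finally show ?thesis by (simp add: power2_eq_square algebra_simps)
  qed
  have "norm (F t - F T0) \<le> M * (L * eps^2 * dt) * measure lborel (cbox T0 t)"
    by (rule has_integral_bound[OF _ int[unfolded cbox_interval[symmetric]] bnd])
      (use M0 eps dt L0 in simp)
  moreover have "F t = E t" unfolding F_def by simp
  moreover have "F T0 = 0" unfolding F_def E0 by simp
  ultimately show ?thesis using t unfolding E_def X_def Zd_def by simp
qed




lemma tc1:
  fixes f g :: "real \<Rightarrow> real"
  assumes f: "(f has_integral th) {a..T}" and g: "(g has_integral th) {a..Tt}"
    and aT: "a \<le> T" and TT: "T \<le> Tt"
    and lg: "\<forall>s\<in>{a..Tt}. lm \<le> g s"
    and fg: "\<forall>s\<in>{a..T}. \<bar>f s - g s\<bar> \<le> K"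
  shows "lm * (Tt - T) \<le> K * (T - a)"
proof -
  have gi: "g integrable_on {a..Tt}" using g by blast
  have gi1: "g integrable_on {a..T}" by (rule integrable_subinterval_real[OF gi]) (use TT in auto)
  have gi2: "g integrable_on {T..Tt}" by (rule integrable_subinterval_real[OF gi]) (use aT in auto)
  have fi: "f integrable_on {a..T}" using f by blast
  have comb: "integral {a..T} g + integral {T..Tt} g = th"
    using Henstock_Kurzweil_Integration.integral_combine[OF aT TT gi] integral_unique[OF g] by simp
  have i2: "lm * (Tt - T) \<le> integral {T..Tt} g"
  proof -
    have "integral {T..Tt} (\<lambda>x. lm) \<le> integral {T..Tt} g"
      by (rule integral_le) (use gi2 lg aT in auto)
    then show ?thesis using TT by (simp add: mult.commute)
  qed
  have i1: "integral {a..T} f - integral {a..T} g \<le> K * (T - a)"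
  proof -
    have "integral {a..T} (\<lambda>s. f s - g s) \<le> integral {a..T} (\<lambda>x. K)"
      by (rule integral_le) (use fi gi1 fg in \<open>auto intro: integrable_diff dest!: bspec abs_le_D1\<close>)
    then show ?thesis using aT by (simp add: integral_diff[OF fi gi1] mult.commute)
  qed
  have "integral {a..T} f = th" using f by blast
  then show ?thesis using comb i1 i2 by linarith
qed

lemma time_compare:
  fixes f g :: "real \<Rightarrow> real"
  assumes f: "(f has_integral th) {a..T}" and g: "(g has_integral th) {a..Tt}"
    and aT: "a \<le> T" and aTt: "a \<le> Tt"
    and lf: "\<forall>s\<in>{a..T}. lm \<le> f s"
    and lg: "\<forall>s\<in>{a..Tt}. lm \<le> g s"
    and fg: "\<forall>s\<in>{a..min T Tt}. \<bar>f s - g s\<bar> \<le> K"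
  shows "lm * \<bar>T - Tt\<bar> \<le> K * (min T Tt - a)"
proof (cases "T \<le> Tt")
  case True
  then show ?thesis using tc1[OF f g aT True lg] fg by (simp add: min_def)
next
  case False
  have "\<forall>s\<in>{a..Tt}. \<bar>g s - f s\<bar> \<le> K" using fg False by (auto simp: min_def abs_minus_commute)
  then show ?thesis using tc1[OF g f aTt _ lf] False by (simp add: min_def)
qed

lemma time_bound:
  fixes f :: "real \<Rightarrow> real"
  assumes f: "(f has_integral th) {a..T}" and aT: "a \<le> T"
    and lf: "\<forall>s\<in>{a..T}. lm \<le> f s"
  shows "lm * (T - a) \<le> th"
proof -
  have "integral {a..T} (\<lambda>x. lm) \<le> integral {a..T} f"
    by (rule integral_le) (use f lf in auto)
  then show ?thesis using aT integral_unique[OF f] by (simp add: mult.commute)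
qed




theorem mainTheorem8:
  fixes S :: "'d::euclidean_space \<Rightarrow> 'n::euclidean_space"
    and DS :: "'d \<Rightarrow> ('d \<Rightarrow>\<^sub>L 'n)"
    and D2S :: "'d \<Rightarrow> ('d \<Rightarrow>\<^sub>L ('d \<Rightarrow>\<^sub>L 'n))"
    and lam0 lam_min lam_max M :: real
    and b :: 'n
  assumes S_deriv: "\<And>x. (S has_derivative blinfun_apply (DS x)) (at x)"
    and DS_deriv: "\<And>x. (DS has_derivative blinfun_apply (D2S x)) (at x)"
    and D2S_cont: "continuous_on UNIV D2S"
    and S_bdd: "bounded (range S)"
    and DS_bdd: "bounded (range DS)"
    and D2S_bdd: "bounded (range D2S)"
    and lam_min_pos: "0 < lam_min"
    and lam_min_max: "lam_min \<le> lam_max"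
  shows "\<exists>C::real. \<forall>(eps::real) (dt::real) (theta::real) (tau :: 'n \<Rightarrow>\<^sub>L 'n) (tauinv :: 'n \<Rightarrow>\<^sub>L 'n)
           (V::'d) (T0::real) (X0::'d) (Y0::'n) (Y :: real \<Rightarrow> 'n) (T::real) (Tt::real).
     0 < eps \<longrightarrow> 0 < dt \<longrightarrow> 0 < theta \<longrightarrow>
     tau o\<^sub>L tauinv = id_blinfun \<longrightarrow> tauinv o\<^sub>L tau = id_blinfun \<longrightarrow>
     (\<forall>t\<ge>0. norm (semigrp tauinv t) \<le> M) \<longrightarrow>
     norm V = 1 \<longrightarrow>
     T0 \<le> T \<longrightarrow> T0 \<le> Tt \<longrightarrow>
     Y T0 = Y0 \<longrightarrow>
     (\<forall>t\<in>{T0..T}. (Y has_vector_derivative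
         (- blinfun_apply tauinv (Y t - S (X0 + (eps * (t - T0)) *\<^sub>R V)))) (at t within {T0..T})) \<longrightarrow>
     (\<forall>t\<in>{T0..T}. lam_min \<le> rate lam0 b (S (X0 + (eps * (t - T0)) *\<^sub>R V) - Y t)
                    \<and> rate lam0 b (S (X0 + (eps * (t - T0)) *\<^sub>R V) - Y t) \<le> lam_max) \<longrightarrow>
     (\<forall>t\<in>{T0..Tt}. lam_min \<le> rate lam0 b (disc_Z DS tau tauinv eps dt V T0 X0 (S X0 - Y0) t)
                    \<and> rate lam0 b (disc_Z DS tau tauinv eps dt V T0 X0 (S X0 - Y0) t) \<le> lam_max) \<longrightarrow>
     ((\<lambda>t. rate lam0 b (S (X0 + (eps * (t - T0)) *\<^sub>R V) - Y t)) has_integral theta) {T0..T} \<longrightarrow>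
     ((\<lambda>t. rate lam0 b (disc_Z DS tau tauinv eps dt V T0 X0 (S X0 - Y0) t)) has_integral theta) {T0..Tt} \<longrightarrow>
     \<bar>T - Tt\<bar> \<le> C * eps^2 * dt * theta^2 \<and>
     norm ((X0 + (eps * (T - T0)) *\<^sub>R V) - disc_X DS tau tauinv eps dt V T0 X0 (S X0 - Y0) Tt)
        \<le> C * eps^3 * dt * theta^2"
proof -
  obtain L where Lpos: "0 < L" and LD: "\<And>x. norm (D2S x) \<le> L"
    using D2S_bdd unfolding bounded_pos by auto
  have Lip: "norm (DS x - DS y) \<le> L * norm (x - y)" for x y
  proof (rule differentiable_bound[of UNIV DS "\<lambda>x. blinfun_apply (D2S x)" L x y])
    show "\<And>x. x \<in> UNIV \<Longrightarrow> (DS has_derivative blinfun_apply (D2S x)) (at x within UNIV)"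
      using DS_deriv by simp
    show "\<And>x. x \<in> UNIV \<Longrightarrow> onorm (blinfun_apply (D2S x)) \<le> L"
      using LD by (simp add: norm_blinfun.rep_eq[symmetric])
  qed auto
  define C where "C = norm b * M * L / lam_min ^ 3"
  show ?thesis
  proof (rule exI[of _ C], intro allI impI)
    fix eps dt theta :: real and tau tauinv :: "'n \<Rightarrow>\<^sub>L 'n" and V :: 'd and T0 :: real and X0 :: 'd
      and Y0 :: 'n and Y :: "real \<Rightarrow> 'n" and T Tt :: real
    assume eps: "0 < eps" and dt: "0 < dt" and th: "0 < theta"
      and inv1: "tau o\<^sub>L tauinv = id_blinfun" and inv2: "tauinv o\<^sub>L tau = id_blinfun"
      and Mb: "\<forall>t\<ge>0. norm (semigrp tauinv t) \<le> M"
      and V: "norm V = 1" and T0T: "T0 \<le> T" and T0Tt: "T0 \<le> Tt" and Y0: "Y T0 = Y0"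
      and Yd: "\<forall>t\<in>{T0..T}. (Y has_vector_derivative
         (- blinfun_apply tauinv (Y t - S (X0 + (eps * (t - T0)) *\<^sub>R V)))) (at t within {T0..T})"
      and r1: "\<forall>t\<in>{T0..T}. lam_min \<le> rate lam0 b (S (X0 + (eps * (t - T0)) *\<^sub>R V) - Y t)
                    \<and> rate lam0 b (S (X0 + (eps * (t - T0)) *\<^sub>R V) - Y t) \<le> lam_max"
      and r2: "\<forall>t\<in>{T0..Tt}. lam_min \<le> rate lam0 b (disc_Z DS tau tauinv eps dt V T0 X0 (S X0 - Y0) t)
                    \<and> rate lam0 b (disc_Z DS tau tauinv eps dt V T0 X0 (S X0 - Y0) t) \<le> lam_max"
      and i1: "((\<lambda>t. rate lam0 b (S (X0 + (eps * (t - T0)) *\<^sub>R V) - Y t)) has_integral theta) {T0..T}"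
      and i2: "((\<lambda>t. rate lam0 b (disc_Z DS tau tauinv eps dt V T0 X0 (S X0 - Y0) t)) has_integral theta) {T0..Tt}"
    define f where "f t = rate lam0 b (S (X0 + (eps * (t - T0)) *\<^sub>R V) - Y t)" for t
    define g where "g t = rate lam0 b (disc_Z DS tau tauinv eps dt V T0 X0 (S X0 - Y0) t)" for t
    define K0 where "K0 = norm b * (M * (L * eps^2 * dt))"
    define D where "D = theta / lam_min"
    have M0: "0 \<le> M" using Mb norm_ge_zero order_trans by blast
    have K0: "0 \<le> K0" unfolding K0_def using M0 Lpos dt by simp
    have "lam_min * (T - T0) \<le> theta"
      by (rule time_bound[OF i1[folded f_def] T0T]) (use r1 in \<open>auto simp: f_def\<close>)
    then have TD: "T - T0 \<le> D" using lam_min_pos unfolding D_def by (simp add: field_simps)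
    have fg: "\<forall>s\<in>{T0..min T Tt}. \<bar>f s - g s\<bar> \<le> K0 * D"
    proof
      fix s assume s: "s \<in> {T0..min T Tt}"
      have e: "norm ((S (X0 + (eps * (s - T0)) *\<^sub>R V) - Y s) - disc_Z DS tau tauinv eps dt V T0 X0 (S X0 - Y0) s)
           \<le> M * (L * eps^2 * dt) * (s - T0)"
        by (rule err_bound[OF S_deriv Lip less_imp_le[OF Lpos] inv1 inv2 dt eps V Mb Y0 Yd]) (use s in auto)
      have "\<bar>f s - g s\<bar> = \<bar>b \<bullet> ((S (X0 + (eps * (s - T0)) *\<^sub>R V) - Y s) - disc_Z DS tau tauinv eps dt V T0 X0 (S X0 - Y0) s)\<bar>"
        unfolding f_def g_def rate_def by (simp add: inner_diff_right)
      also have "\<dots> \<le> norm b * norm ((S (X0 + (eps * (s - T0)) *\<^sub>R V) - Y s) - disc_Z DS tau tauinv eps dt V T0 X0 (S X0 - Y0) s)"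
        by (rule Cauchy_Schwarz_ineq2)
      also have "\<dots> \<le> norm b * (M * (L * eps^2 * dt) * (s - T0))"
        by (rule mult_left_mono[OF e]) simp
      also have "\<dots> \<le> K0 * D"
      proof -
        have "s - T0 \<le> D" using s TD by auto
        moreover have "0 \<le> norm b * (M * (L * eps^2 * dt))" using M0 Lpos dt by simp
        ultimately show ?thesis unfolding K0_def by (metis mult.assoc mult_left_mono)
      qed
      finally show "\<bar>f s - g s\<bar> \<le> K0 * D" .
    qed
    have tc: "lam_min * \<bar>T - Tt\<bar> \<le> K0 * D * (min T Tt - T0)"
      by (rule time_compare[OF i1[folded f_def] i2[folded g_def] T0T T0Tt _ _ fg])
        (use r1 r2 in \<open>auto simp: f_def g_def\<close>)
    have "K0 * D * (min T Tt - T0) \<le> K0 * D * D"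
      using TD K0 th lam_min_pos unfolding D_def by (intro mult_left_mono) auto
    with tc have "lam_min * \<bar>T - Tt\<bar> \<le> K0 * D * D" by linarith
    then have "\<bar>T - Tt\<bar> \<le> K0 * D * D / lam_min" using lam_min_pos by (simp add: field_simps)
    also have "K0 * D * D / lam_min = C * eps^2 * dt * theta^2"
      unfolding K0_def D_def C_def using lam_min_pos by (simp add: field_simps power2_eq_square power3_eq_cube)
    finally have T1: "\<bar>T - Tt\<bar> \<le> C * eps^2 * dt * theta^2" .
    have "norm ((X0 + (eps * (T - T0)) *\<^sub>R V) - disc_X DS tau tauinv eps dt V T0 X0 (S X0 - Y0) Tt)
        = eps * \<bar>T - Tt\<bar>"
    proof -
      have "(X0 + (eps * (T - T0)) *\<^sub>R V) - (X0 + (eps * (Tt - T0)) *\<^sub>R V) = (eps * (T - Tt)) *\<^sub>R V"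
        by (simp add: algebra_simps)
      then show ?thesis unfolding disc_X_eq using V eps by (simp add: abs_mult)
    qed
    also have "\<dots> \<le> eps * (C * eps^2 * dt * theta^2)" using T1 eps by simp
    also have "\<dots> = C * eps^3 * dt * theta^2" by (simp add: power2_eq_square power3_eq_cube)
    finally show "\<bar>T - Tt\<bar> \<le> C * eps^2 * dt * theta^2 \<and>
     norm ((X0 + (eps * (T - T0)) *\<^sub>R V) - disc_X DS tau tauinv eps dt V T0 X0 (S X0 - Y0) Tt)
        \<le> C * eps^3 * dt * theta^2" using T1 by simp
  qed
qed


end
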